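(* Let $D$ be a centrally finite division algebra, let $R=D[t_1,\ldots,t_n]$ be the ring of polynomials in $n$ central commuting variables over $D$, let $A$ be a finite subset of $R$, and let $S=D[A]$ be the subring of $R$ generated by $D\cup A$. Then $S$ is centrally finitely generated over $D$.
   Context: All rings are associative with unity. A division algebra is centrally finite if it is finite-dimensional over its center. A ring $S\supseteq D$ is centrally finitely generated over $D$ if $S$ is isomorphic, compatibly with the inclusion of $D$, to a quotient $D[x_1,\ldots,x_m]/I$ of a polynomial ring in central commuting variables by a two-sided ideal $I$ with $D\cap I=\{0\}$; equivalently, $S$ is generated as a ring by $D$ together with finitely many pairwise commuting elements each commuting with every element of $D$. *)

theory Defs
  imports Main "HOL-Library.Poly_Mapping"
begin

text \<open>Polynomials over a (possibly non-commutative) ring 'a in central commuting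
variables indexed by nat: a polynomial is a finitely supported map from monomials
(finitely supported exponent vectors) to coefficients, with the
convolution product of Poly_Mapping (variables commute with everything).\<close>

type_synonym 'a mpoly = "(nat \<Rightarrow>\<^sub>0 nat) \<Rightarrow>\<^sub>0 'a"

definition center :: "'a::ring_1 set" where
  "center = {z. \<forall>x. z * x = x * z}"

definition centrally_finite :: "'a::division_ring itself \<Rightarrow> bool" where
  "centrally_finite _ \<longleftrightarrow>
     (\<exists>B::'a set. finite B \<and>
        (\<forall>d::'a. \<exists>c. (\<forall>b\<in>B. c b \<in> center) \<and> d = (\<Sum>b\<in>B. c b * b)))"

definition const :: "'a::zero \<Rightarrow> 'a mpoly" where
  "const d = Poly_Mapping.single 0 d"

definition poly_ring :: "nat \<Rightarrow> ('a::zero) mpoly set" where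
  "poly_ring n = {p :: 'a mpoly. \<forall>mon\<in>Poly_Mapping.keys p. Poly_Mapping.keys mon \<subseteq> {..<n}}"

inductive_set gen_ring :: "('a::ring_1) mpoly set \<Rightarrow> 'a mpoly set"
  for A :: "'a mpoly set" where
  gen_const: "const d \<in> gen_ring A"
| gen_elem: "a \<in> A \<Longrightarrow> a \<in> gen_ring A"
| gen_add: "p \<in> gen_ring A \<Longrightarrow> q \<in> gen_ring A \<Longrightarrow> p + q \<in> gen_ring A"
| gen_uminus: "p \<in> gen_ring A \<Longrightarrow> - p \<in> gen_ring A"
| gen_mult: "p \<in> gen_ring A \<Longrightarrow> q \<in> gen_ring A \<Longrightarrow> p * q \<in> gen_ring A"

text \<open>S (a ring containing the constants D) is centrally finitely generated over D:
S is isomorphic, compatibly with D, to a quotient D[x_1..x_m]/I with I \<inter> D = 0.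
Equivalently (first isomorphism theorem) there is a surjective unital ring
homomorphism from D[x_0..x_{m-1}] onto S restricting to the identity on D; its
kernel is the ideal I, and I \<inter> D = 0 holds since the map is injective on D.\<close>
definition centrally_fg :: "('a::ring_1) mpoly set \<Rightarrow> bool" where
  "centrally_fg S \<longleftrightarrow>
     (\<exists>(m::nat) (\<phi>::'a mpoly \<Rightarrow> 'a mpoly).
        \<phi> ` poly_ring m = S \<and>
        (\<forall>p\<in>poly_ring m. \<forall>q\<in>poly_ring m. \<phi> (p + q) = \<phi> p + \<phi> q) \<and>
        (\<forall>p\<in>poly_ring m. \<forall>q\<in>poly_ring m. \<phi> (p * q) = \<phi> p * \<phi> q) \<and>
        \<phi> 1 = 1 \<and>
        (\<forall>d. \<phi> (const d) = const d))"

end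

theory Submission
  imports Defs
begin

lemma const_add: "const (a + b) = const a + const b"
  by (simp add: const_def single_add)
lemma const_mult: "const (a * b) = (const a * const (b::'a::ring_1))"
  by (simp add: const_def mult_single)
lemma const_0[simp]: "const 0 = 0" by (simp add: const_def)
lemma const_1[simp]: "const 1 = 1" by (simp add: const_def)
lemma const_uminus: "const (- a) = - const (a::'a::ring_1)" by (simp add: const_def single_uminus)
lemma const_diff: "const (a - b) = const a - const (b::'a::ring_1)" by (simp add: const_def single_diff)

lemma mpoly_decomp: "(p :: ('b::comm_monoid_add \<Rightarrow>\<^sub>0 'a::comm_monoid_add)) = (\<Sum>k\<in>Poly_Mapping.keys p. Poly_Mapping.single k (Poly_Mapping.lookup p k))"
proof (rule poly_mapping_eqI)
  fix k
  show "Poly_Mapping.lookup p k = Poly_Mapping.lookup (\<Sum>k\<in>Poly_Mapping.keys p. Poly_Mapping.single k (Poly_Mapping.lookup p k)) k"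
    by (cases "k \<in> Poly_Mapping.keys p") (auto simp: lookup_sum lookup_single when_def in_keys_iff)
qed

lemma const_mult_left: "const d * (p::'a::ring_1 mpoly) = (\<Sum>k\<in>Poly_Mapping.keys p. Poly_Mapping.single k (d * Poly_Mapping.lookup p k))"
  apply (subst (1) mpoly_decomp[of p])
  by (simp add: sum_distrib_left const_def mult_single)

lemma const_mult_right: "(p::'a::ring_1 mpoly) * const d = (\<Sum>k\<in>Poly_Mapping.keys p. Poly_Mapping.single k (Poly_Mapping.lookup p k * d))"
  apply (subst (1) mpoly_decomp[of p])
  by (simp add: sum_distrib_right const_def mult_single)

lemma center_const: "c \<in> center \<Longrightarrow> const c \<in> (center :: 'a::ring_1 mpoly set)"
  unfolding center_def
  by (auto simp: const_mult_left const_mult_right)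

lemma center_single: "Poly_Mapping.single k (1::'a::ring_1) \<in> (center :: 'a mpoly set)"
  unfolding center_def
proof safe
  fix p :: "'a mpoly"
  show "Poly_Mapping.single k 1 * p = p * Poly_Mapping.single k 1"
    apply (subst (1 2) mpoly_decomp[of p])
    by (simp add: sum_distrib_left sum_distrib_right mult_single add.commute[of k])
qed

lemma center_add: "a \<in> center \<Longrightarrow> b \<in> center \<Longrightarrow> a + b \<in> (center::'a::ring_1 set)"
  by (simp add: center_def algebra_simps)
lemma center_mult: "a \<in> center \<Longrightarrow> b \<in> center \<Longrightarrow> a * b \<in> (center::'a::ring_1 set)"
  unfolding center_def
proof safe
  fix x assume "\<forall>x. a * x = x * a" "\<forall>x. b * x = x * b"
  then show "a * b * x = x * (a * b)" by (metis mult.assoc)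
qed
lemma center_0: "0 \<in> (center::'a::ring_1 set)" by (simp add: center_def)
lemma center_1: "1 \<in> (center::'a::ring_1 set)" by (simp add: center_def)
lemma center_sum: "(\<And>i. i \<in> I \<Longrightarrow> f i \<in> center) \<Longrightarrow> sum f I \<in> (center::'a::ring_1 set)"
  by (induction I rule: infinite_finite_induct) (auto simp: center_0 center_add)
lemma center_power: "a \<in> center \<Longrightarrow> a ^ n \<in> (center::'a::ring_1 set)"
  by (induction n) (auto simp: center_1 center_mult)
lemma center_comm: "a \<in> center \<Longrightarrow> a * x = x * (a::'a::ring_1)"
  by (simp add: center_def)

inductive_set spanD :: "('a::ring_1) mpoly set \<Rightarrow> 'a mpoly set" for W where
  sp0: "0 \<in> spanD W"
| spstep: "w \<in> W \<Longrightarrow> x \<in> spanD W \<Longrightarrow> const d * w + x \<in> spanD W"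

lemma spanD_add: "x \<in> spanD W \<Longrightarrow> y \<in> spanD W \<Longrightarrow> x + y \<in> spanD W"
  by (induction x rule: spanD.induct) (auto simp: add.assoc intro: spanD.intros)

lemma spanD_lmult: "x \<in> spanD W \<Longrightarrow> const e * x \<in> spanD W"
proof (induction x rule: spanD.induct)
  case sp0 then show ?case by (simp add: spanD.sp0)
next
  case (spstep w x d)
  have "const e * (const d * w + x) = const (e * d) * w + const e * x"
    by (simp add: const_mult distrib_left mult.assoc)
  then show ?case using spstep by (simp add: spanD.spstep)
qed

lemma spanD_uminus: "x \<in> spanD W \<Longrightarrow> - x \<in> spanD W"
  using spanD_lmult[of x W "-1"] by (simp add: const_uminus)

lemma spanD_diff: "x \<in> spanD W \<Longrightarrow> y \<in> spanD W \<Longrightarrow> x - y \<in> spanD W"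
  using spanD_add[OF _ spanD_uminus] by (metis diff_conv_add_uminus)

lemma spanD_elem: "w \<in> W \<Longrightarrow> w \<in> spanD W"
  using spanD.spstep[OF _ spanD.sp0, of w W 1] by simp

lemma spanD_comm: assumes WC: "W \<subseteq> center" shows "x \<in> spanD W \<Longrightarrow> const e * x - x * const e \<in> spanD W"
proof (induction x rule: spanD.induct)
  case sp0 then show ?case by (simp add: spanD.sp0)
next
  case (spstep w x d)
  have wc: "w * const e = const e * w" using spstep WC center_comm by blast
  have "const e * (const d * w + x) - (const d * w + x) * const e
     = const (e * d - d * e) * w + (const e * x - x * const e)"
    by (simp add: const_mult const_diff algebra_simps mult.assoc wc)
  then show ?case using spstep by (simp add: spanD.spstep)
qed

lemma spanD_subset:
  assumes "0 \<in> N" "\<And>x y. x \<in> N \<Longrightarrow> y \<in> N \<Longrightarrow> x + y \<in> N"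
    "\<And>x d. x \<in> N \<Longrightarrow> const d * x \<in> N" "W \<subseteq> N"
  shows "x \<in> spanD W \<Longrightarrow> x \<in> N"
  by (induction x rule: spanD.induct) (use assms in auto)

lemma spanD_finite: "x \<in> spanD W \<Longrightarrow> \<exists>G. finite G \<and> G \<subseteq> W \<and> x \<in> spanD G"
proof (induction x rule: spanD.induct)
  case sp0 then show ?case by (auto intro: spanD.sp0)
next
  case (spstep w x d)
  then obtain G where G: "finite G" "G \<subseteq> W" "x \<in> spanD G" by blast
  have mono: "y \<in> spanD G \<Longrightarrow> y \<in> spanD (insert w G)" for y
    by (induction y rule: spanD.induct) (auto intro: spanD.intros)
  show ?case
    by (rule exI[of _ "insert w G"]) (use G spstep mono in \<open>auto intro: spanD.intros\<close>)
qed

lemma claim: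
  fixes N :: "('a::division_ring) mpoly set"
  assumes N0: "0 \<in> N"
    and Nadd: "\<And>x y. x \<in> N \<Longrightarrow> y \<in> N \<Longrightarrow> x + y \<in> N"
    and Ndiff: "\<And>x y. x \<in> N \<Longrightarrow> y \<in> N \<Longrightarrow> x - y \<in> N"
    and Nl: "\<And>x d. x \<in> N \<Longrightarrow> const d * x \<in> N"
    and Nr: "\<And>x d. x \<in> N \<Longrightarrow> x * const d \<in> N"
  shows "finite I \<Longrightarrow> (\<forall>i\<in>I. z i \<in> center) \<Longrightarrow> x \<in> N \<Longrightarrow> w \<in> spanD (N \<inter> center)
     \<Longrightarrow> x = w + (\<Sum>i\<in>I. const (d i) * z i) \<Longrightarrow> x \<in> spanD (N \<inter> center)"
proof (induction "card I" arbitrary: I x w d rule: less_induct)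
  case less
  define W where "W = N \<inter> (center :: 'a mpoly set)"
  have WC: "W \<subseteq> center" unfolding W_def by blast
  have spN: "y \<in> spanD W \<Longrightarrow> y \<in> N" for y
    by (rule spanD_subset[of N W]) (use N0 Nadd Nl W_def in auto)
  note IH = less.hyps[folded W_def]
  have fin: "finite I" and zc: "\<forall>i\<in>I. z i \<in> center" and xN: "x \<in> N"
    and wW: "w \<in> spanD W" and xeq: "x = w + (\<Sum>i\<in>I. const (d i) * z i)"
    using less.prems W_def by auto
  show ?case
  proof (cases "I = {}")
    case True then show ?thesis using xeq wW W_def by simp
  next
    case False
    then obtain i0 where i0: "i0 \<in> I" by blast
    have cardlt: "\<And>i. i \<in> I \<Longrightarrow> card (I - {i}) < card I"
      using fin by (meson card_Diff1_less)
    show ?thesis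
    proof (cases "d i0 = 0")
      case True
      have "(\<Sum>i\<in>I. const (d i) * z i) = (\<Sum>i\<in>I - {i0}. const (d i) * z i)"
        using sum.remove[OF fin i0, of "\<lambda>i. const (d i) * z i"] True by simp
      then show ?thesis
        using IH[OF cardlt[OF i0], of x w d] fin zc xN wW xeq W_def by auto
    next
      case False
      define u where "u = inverse (d i0)"
      define x' where "x' = const u * x"
      define w' where "w' = const u * w"
      define d' where "d' i = u * d i" for i
      have x'N: "x' \<in> N" unfolding x'_def using xN Nl by blast
      have w'W: "w' \<in> spanD W" unfolding w'_def using wW spanD_lmult by blast
      have x'eq: "x' = w' + (\<Sum>i\<in>I. const (d' i) * z i)"
        unfolding x'_def w'_def d'_def xeq
        by (simp add: distrib_left sum_distrib_left const_mult mult.assoc)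
      have d'i0: "d' i0 = 1" unfolding d'_def u_def using False by simp
      have xback: "x = const (d i0) * x'"
        unfolding x'_def u_def using False
        by (simp flip: mult.assoc const_mult)
      have x'W: "x' \<in> spanD W"
      proof (cases "\<forall>i\<in>I. d' i \<in> center")
        case True
        define zz where "zz = (\<Sum>i\<in>I. const (d' i) * z i)"
        have "zz \<in> center" unfolding zz_def
          using True zc by (intro center_sum center_mult center_const) auto
        moreover have "zz \<in> N"
          using Ndiff[OF x'N spN[OF w'W]] x'eq zz_def by simp
        ultimately have "zz \<in> W" unfolding W_def by blast
        then show ?thesis using x'eq zz_def spanD_add[OF w'W spanD_elem] by simp
      next
        case False
        then obtain i1 where i1: "i1 \<in> I" "d' i1 \<notin> center" by blast
        then obtain e where e: "d' i1 * e \<noteq> e * d' i1" unfolding center_def by blast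
        define c where "c i = e * d' i - d' i * e" for i
        define y where "y = const e * x' - x' * const e"
        have yN: "y \<in> N" unfolding y_def using x'N Nl Nr Ndiff by blast
        have comm_w': "const e * w' - w' * const e \<in> spanD W"
          using spanD_comm[OF WC w'W] .
        have zce: "z i * const e = const e * z i" if "i \<in> I" for i
          using zc that center_comm by blast
        have yeq: "y = (const e * w' - w' * const e) + (\<Sum>i\<in>I. const (c i) * z i)"
          unfolding y_def x'eq c_def
          by (simp add: algebra_simps sum_distrib_left sum_distrib_right const_mult const_diff
              sum_subtractf mult.assoc zce cong: sum.cong)
        have "(\<Sum>i\<in>I. const (c i) * z i) = (\<Sum>i\<in>I - {i0}. const (c i) * z i)"
          using sum.remove[OF fin i0, of "\<lambda>i. const (c i) * z i"] d'i0 by (simp add: c_def)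
        then have yW: "y \<in> spanD W"
          using IH[OF cardlt[OF i0], of y _ c] fin zc yN comm_w' yeq W_def by auto
        define v where "v = (\<Sum>i\<in>I. const (c i) * z i)"
        have vW: "v \<in> spanD W" using spanD_diff[OF yW comm_w'] yeq v_def by simp
        have ci1: "c i1 \<noteq> 0" using e c_def by auto
        define r where "r = d' i1 * inverse (c i1)"
        define x'' where "x'' = x' - const r * v"
        define w'' where "w'' = w'"
        define d'' where "d'' i = d' i - r * c i" for i
        have x''N: "x'' \<in> N" unfolding x''_def using x'N spN[OF vW] Nl Ndiff by blast
        have w''W: "w'' \<in> spanD W" unfolding w''_def using w'W by blast
        have x''eq: "x'' = w'' + (\<Sum>i\<in>I. const (d'' i) * z i)"
        proof -
          have "(\<Sum>i\<in>I. const (d'' i) * z i) = (\<Sum>i\<in>I. const (d' i) * z i) - const r * v"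
            by (simp add: d''_def v_def const_diff const_mult left_diff_distrib sum_subtractf sum_distrib_left mult.assoc)
          then show ?thesis by (simp add: x''_def w''_def x'eq)
        qed
        have d''i1: "d'' i1 = 0" unfolding d''_def r_def using ci1 by (simp add: mult.assoc)
        have "(\<Sum>i\<in>I. const (d'' i) * z i) = (\<Sum>i\<in>I - {i1}. const (d'' i) * z i)"
          using sum.remove[OF fin i1(1), of "\<lambda>i. const (d'' i) * z i"] d''i1 by simp
        then have "x'' \<in> spanD W"
          using IH[OF cardlt[OF i1(1)], of x'' w'' d''] fin zc x''N w''W x''eq W_def by auto
        then show ?thesis
          using spanD_add[OF _ spanD_lmult[OF vW]] unfolding x''_def by (metis diff_add_cancel)
      qed
      show ?thesis using xback spanD_lmult[OF x'W] W_def by simp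
    qed
  qed
qed

definition ev :: "((nat \<Rightarrow>\<^sub>0 nat) \<Rightarrow> 'a::ring_1 mpoly) \<Rightarrow> 'a mpoly \<Rightarrow> 'a mpoly" where
  "ev M p = (\<Sum>k\<in>Poly_Mapping.keys p. const (Poly_Mapping.lookup p k) * M k)"

lemma ev_add: "ev M (p + q) = ev M p + ev M q"
  unfolding ev_def
  by (rule setsum_keys_plus_distrib) (auto simp: const_add distrib_right)

lemma ev_0[simp]: "ev M 0 = 0" by (simp add: ev_def)

lemma ev_single: "ev M (Poly_Mapping.single k a) = const a * M k"
  by (simp add: ev_def)

lemma ev_sum: "ev M (sum f I) = (\<Sum>i\<in>I. ev M (f i))"
  by (induction I rule: infinite_finite_induct) (auto simp: ev_add)

lemma ev_uminus: "ev M (- p) = - ev M p"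
  using minus_unique[of "ev M p" "ev M (-p)"] ev_add[of M p "-p"] by simp

lemma mult_expand: "(p::'a::ring_1 mpoly) * q = (\<Sum>k\<in>Poly_Mapping.keys p. \<Sum>l\<in>Poly_Mapping.keys q.
    Poly_Mapping.single (k + l) (Poly_Mapping.lookup p k * Poly_Mapping.lookup q l))"
  apply (subst (1) mpoly_decomp[of p])
  apply (subst (1) mpoly_decomp[of q])
  apply (simp add: sum_distrib_left sum_distrib_right mult_single)
  by (rule sum.swap)

lemma ev_mult:
  assumes Madd: "\<And>k l. M (k + l) = M k * M l" and Mc: "\<And>k. M k \<in> center"
  shows "ev M (p * q) = ev M p * ev M q"
proof -
  have "ev M (p * q) = (\<Sum>k\<in>Poly_Mapping.keys p. \<Sum>l\<in>Poly_Mapping.keys q.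
      const (Poly_Mapping.lookup p k * Poly_Mapping.lookup q l) * M (k + l))"
    by (subst mult_expand) (simp add: ev_sum ev_single)
  also have "\<dots> = (\<Sum>k\<in>Poly_Mapping.keys p. \<Sum>l\<in>Poly_Mapping.keys q.
      (const (Poly_Mapping.lookup p k) * M k) * (const (Poly_Mapping.lookup q l) * M l))"
  proof (intro sum.cong refl)
    fix k l
    have cm: "M k * const (Poly_Mapping.lookup q l) = const (Poly_Mapping.lookup q l) * M k"
      using Mc center_comm by blast
    have "(const (Poly_Mapping.lookup p k) * M k) * (const (Poly_Mapping.lookup q l) * M l)
       = const (Poly_Mapping.lookup p k) * ((M k * const (Poly_Mapping.lookup q l)) * M l)"
      by (simp add: mult.assoc)
    also have "\<dots> = const (Poly_Mapping.lookup p k) * ((const (Poly_Mapping.lookup q l) * M k) * M l)"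
      by (simp only: cm)
    also have "\<dots> = const (Poly_Mapping.lookup p k * Poly_Mapping.lookup q l) * M (k + l)"
      by (simp add: Madd const_mult mult.assoc)
    finally show "const (Poly_Mapping.lookup p k * Poly_Mapping.lookup q l) * M (k + l) =
      (const (Poly_Mapping.lookup p k) * M k) * (const (Poly_Mapping.lookup q l) * M l)" by simp
  qed
  also have "\<dots> = ev M p * ev M q"
    apply (simp add: ev_def sum_distrib_left sum_distrib_right)
    by (rule sum.swap)
  finally show ?thesis .
qed

lemma ev_const: "M 0 = 1 \<Longrightarrow> ev M (const d) = const d"
  by (simp add: const_def ev_single)

definition monx :: "'a::ring_1 mpoly list \<Rightarrow> nat list \<Rightarrow> (nat \<Rightarrow>\<^sub>0 nat) \<Rightarrow> 'a mpoly" where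
  "monx gs xs k = List.foldr (\<lambda>i acc. (gs ! i) ^ Poly_Mapping.lookup k i * acc) xs 1"

lemma monx_center: "(\<And>i. i \<in> set xs \<Longrightarrow> gs ! i \<in> center) \<Longrightarrow> monx gs xs k \<in> center"
  unfolding monx_def
  by (induction xs) (auto simp: center_1 center_mult center_power)

lemma monx_zero: "monx gs xs 0 = 1"
  unfolding monx_def by (induction xs) auto

lemma monx_add: "(\<And>i. i \<in> set xs \<Longrightarrow> gs ! i \<in> center) \<Longrightarrow> monx gs xs (k + l) = monx gs xs k * monx gs xs l"
proof (induction xs)
  case Nil then show ?case by (simp add: monx_def)
next
  case (Cons i xs)
  have c: "monx gs xs k * (gs ! i) ^ Poly_Mapping.lookup l i = (gs ! i) ^ Poly_Mapping.lookup l i * monx gs xs k"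
    using Cons.prems center_power center_comm by (metis list.set_intros(1))
  have c2: "(gs ! i) ^ Poly_Mapping.lookup l i * (monx gs xs k * monx gs xs l)
     = monx gs xs k * ((gs ! i) ^ Poly_Mapping.lookup l i * monx gs xs l)"
    by (simp add: mult.assoc[symmetric] c)
  have "monx gs (i # xs) (k + l) = (gs ! i) ^ Poly_Mapping.lookup k i * ((gs ! i) ^ Poly_Mapping.lookup l i
     * (monx gs xs k * monx gs xs l))"
    using Cons by (simp add: monx_def lookup_add power_add mult.assoc)
  also have "\<dots> = (gs ! i) ^ Poly_Mapping.lookup k i * (monx gs xs k * ((gs ! i) ^ Poly_Mapping.lookup l i
     * monx gs xs l))" by (simp only: c2)
  also have "\<dots> = monx gs (i # xs) k * monx gs (i # xs) l"
    by (simp add: monx_def mult.assoc)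
  finally show ?case .
qed

lemma monx_single: "distinct xs \<Longrightarrow> monx gs xs (Poly_Mapping.single j 1) = (if j \<in> set xs then gs ! j else 1)"
  unfolding monx_def
  by (induction xs) (auto simp: lookup_single when_def)

lemma poly_ring_add: "p \<in> poly_ring m \<Longrightarrow> q \<in> poly_ring m \<Longrightarrow> p + q \<in> poly_ring m"
  unfolding poly_ring_def using keys_add[of p q] by blast

lemma keys_uminus': "Poly_Mapping.keys (- (p::'a::ring_1 mpoly)) = Poly_Mapping.keys p"
  by (auto simp: in_keys_iff)

lemma poly_ring_uminus: "p \<in> poly_ring m \<Longrightarrow> - (p::'a::ring_1 mpoly) \<in> poly_ring m"
  unfolding poly_ring_def keys_uminus' by simp

lemma poly_ring_mult: "p \<in> poly_ring m \<longrightarrow> q \<in> poly_ring m \<longrightarrow> (p::'a::ring_1 mpoly) * q \<in> poly_ring m"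
  unfolding poly_ring_def mem_Collect_eq
proof (intro impI ballI subsetI)
  fix mon x
  assume p: "\<forall>mon\<in>Poly_Mapping.keys p. Poly_Mapping.keys mon \<subseteq> {..<m}"
    and q: "\<forall>mon\<in>Poly_Mapping.keys q. Poly_Mapping.keys mon \<subseteq> {..<m}"
    and mon: "mon \<in> Poly_Mapping.keys (p * q)" and x: "x \<in> Poly_Mapping.keys mon"
  obtain a b where ab: "mon = a + b" "a \<in> Poly_Mapping.keys p" "b \<in> Poly_Mapping.keys q"
    using keys_mult[of p q] mon by blast
  have "x \<in> Poly_Mapping.keys a \<union> Poly_Mapping.keys b" using keys_add[of a b] x ab(1) by blast
  then show "x \<in> {..<m}" using p q ab(2,3) by blast
qed

lemma poly_ring_const: "const d \<in> poly_ring m"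
  unfolding poly_ring_def const_def by (cases "d = 0") auto

lemma poly_ring_var: "j < m \<Longrightarrow> Poly_Mapping.single (Poly_Mapping.single j 1) (1::'a::ring_1) \<in> poly_ring m"
  unfolding poly_ring_def by simp

lemma spanD_mono': "x \<in> spanD G1 \<Longrightarrow> G1 \<subseteq> G2 \<Longrightarrow> x \<in> spanD G2"
  by (induction x rule: spanD.induct) (auto intro: spanD.intros)

theorem corollary4p5:
  fixes n :: nat and A :: "('a::division_ring) mpoly set"
  assumes "centrally_finite TYPE('a)"
    and "finite A"
    and "A \<subseteq> poly_ring n"
  shows "centrally_fg (gen_ring A)"
proof -
  let ?N = "gen_ring A"
  have N0: "0 \<in> ?N" using gen_ring.gen_const[of 0 A] by simp
  have Nadd: "\<And>x y. x \<in> ?N \<Longrightarrow> y \<in> ?N \<Longrightarrow> x + y \<in> ?N" by (rule gen_ring.gen_add)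
  have Ndiff: "\<And>x y. x \<in> ?N \<Longrightarrow> y \<in> ?N \<Longrightarrow> x - y \<in> ?N"
    by (metis diff_conv_add_uminus gen_ring.gen_add gen_ring.gen_uminus)
  have Nl: "\<And>x d. x \<in> ?N \<Longrightarrow> const d * x \<in> ?N" by (rule gen_ring.gen_mult[OF gen_ring.gen_const])
  have Nr: "\<And>x d. x \<in> ?N \<Longrightarrow> x * const d \<in> ?N" by (rule gen_ring.gen_mult[OF _ gen_ring.gen_const])
  have Nsum: "(\<And>i. i \<in> I \<Longrightarrow> f i \<in> ?N) \<Longrightarrow> sum f I \<in> ?N" for f and I :: "'b set"
    by (induction I rule: infinite_finite_induct) (auto simp: N0 Nadd)
  define W where "W = ?N \<inter> center"
  have aW: "a \<in> spanD W" if aA: "a \<in> A" for a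
  proof -
    have "(\<Sum>k\<in>Poly_Mapping.keys a. const (Poly_Mapping.lookup a k) * Poly_Mapping.single k 1)
        = (\<Sum>k\<in>Poly_Mapping.keys a. Poly_Mapping.single k (Poly_Mapping.lookup a k))"
      by (simp add: const_def mult_single)
    then have aeq: "a = 0 + (\<Sum>k\<in>Poly_Mapping.keys a. const (Poly_Mapping.lookup a k) * Poly_Mapping.single k 1)"
      using mpoly_decomp[of a] by simp
    show ?thesis unfolding W_def
      by (rule claim[OF N0 Nadd Ndiff Nl Nr, of "Poly_Mapping.keys a" "\<lambda>k. Poly_Mapping.single k 1" a 0
            "\<lambda>k. Poly_Mapping.lookup a k"])
         (use aeq aA center_single gen_ring.gen_elem spanD.sp0 in auto)
  qed
  have "\<forall>a\<in>A. \<exists>G. finite G \<and> G \<subseteq> W \<and> a \<in> spanD G" using aW spanD_finite by blast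
  then obtain Gf where Gf: "\<And>a. a \<in> A \<Longrightarrow> finite (Gf a) \<and> Gf a \<subseteq> W \<and> a \<in> spanD (Gf a)"
    by metis
  define G where "G = \<Union> (Gf ` A)"
  have Gfin: "finite G" unfolding G_def using Gf assms(2) by blast
  have GW: "G \<subseteq> W" unfolding G_def using Gf by blast
  have aG: "a \<in> spanD G" if "a \<in> A" for a
    using spanD_mono'[of a "Gf a" G] Gf[OF that] that unfolding G_def by blast
  obtain gs where gs: "set gs = G" "distinct gs" using finite_distinct_list[OF Gfin] by blast
  define m where "m = length gs"
  define M where "M = monx gs [0..<m]"
  have gsC: "gs ! i \<in> center" if "i \<in> set [0..<m]" for i
    using that GW gs(1) W_def m_def nth_mem by fastforce
  have gsN: "gs ! i \<in> ?N" if "i \<in> set [0..<m]" for i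
    using that GW gs(1) W_def m_def nth_mem by fastforce
  have Madd: "\<And>k l. M (k + l) = M k * M l" unfolding M_def using monx_add gsC by blast
  have Mc: "\<And>k. M k \<in> center" unfolding M_def using monx_center gsC by blast
  have M0: "M 0 = 1" unfolding M_def by (rule monx_zero)
  have monN: "(\<And>i. i \<in> set xs \<Longrightarrow> gs ! i \<in> ?N) \<Longrightarrow> monx gs xs k \<in> ?N" for xs k
  proof (induction xs)
    case Nil
    then show ?case using gen_ring.gen_const[of 1 A] by (simp add: monx_def)
  next
    case (Cons i xs)
    have "(gs ! i) ^ j \<in> ?N" for j
      using Cons.prems gen_ring.gen_const[of 1 A]
      by (induction j) (auto intro: gen_ring.gen_mult)
    then show ?case using Cons by (auto simp: monx_def intro: gen_ring.gen_mult)
  qed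
  have MN: "M k \<in> ?N" for k unfolding M_def using monN gsN by blast
  have evN: "ev M p \<in> ?N" for p
    unfolding ev_def by (rule Nsum) (auto intro: Nl MN)
  have evX: "ev M (Poly_Mapping.single (Poly_Mapping.single j 1) 1) = gs ! j" if "j < m" for j
    using that monx_single[of "[0..<m]" gs j] by (simp add: ev_single M_def)
  have spanI: "x \<in> ev M ` poly_ring m" if "x \<in> spanD G" for x
    using that
  proof (induction x rule: spanD.induct)
    case sp0
    have "0 \<in> poly_ring m" using poly_ring_const[of 0 m] by simp
    then show ?case by force
  next
    case (spstep w x d)
    then obtain px where px: "px \<in> poly_ring m" "x = ev M px" by blast
    obtain j where j: "j < m" "w = gs ! j" using spstep(1) gs(1) m_def by (metis in_set_conv_nth)
    define X :: "'a mpoly" where "X = Poly_Mapping.single (Poly_Mapping.single j 1) 1"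
    have Xp: "X \<in> poly_ring m" unfolding X_def using poly_ring_var j by blast
    have pp: "const d * X + px \<in> poly_ring m"
      using poly_ring_add poly_ring_mult[rule_format] poly_ring_const Xp px by blast
    have "ev M (const d * X + px) = const d * w + x"
      using evX[OF j(1)] j px by (simp add: X_def ev_add ev_mult[OF Madd Mc] ev_const[of M, OF M0])
    then show ?case using pp by force
  qed
  have img: "ev M ` poly_ring m = ?N"
  proof
    show "ev M ` poly_ring m \<subseteq> ?N" using evN by blast
  next
    show "?N \<subseteq> ev M ` poly_ring m"
    proof
      fix x assume "x \<in> ?N"
      then show "x \<in> ev M ` poly_ring m"
      proof (induction x rule: gen_ring.induct)
        case (gen_const d)
        then show ?case using poly_ring_const ev_const[of M, OF M0] by (metis image_eqI)
      next
        case (gen_elem a)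
        then show ?case using spanI aG by blast
      next
        case (gen_add p q)
        then obtain p' q' where "p' \<in> poly_ring m" "p = ev M p'" "q' \<in> poly_ring m" "q = ev M q'" by blast
        then show ?case using poly_ring_add ev_add by (metis image_eqI)
      next
        case (gen_uminus p)
        then obtain p' where "p' \<in> poly_ring m" "p = ev M p'" by blast
        then show ?case using poly_ring_uminus ev_uminus by (metis image_eqI)
      next
        case (gen_mult p q)
        then obtain p' q' where "p' \<in> poly_ring m" "p = ev M p'" "q' \<in> poly_ring m" "q = ev M q'" by blast
        then show ?case using poly_ring_mult[rule_format] ev_mult[OF Madd Mc] by (metis image_eqI)
      qed
    qed
  qed
  show ?thesis
    unfolding centrally_fg_def
  proof (intro exI[of _ m] exI[of _ "ev M"] conjI ballI allI)
    show "ev M ` poly_ring m = ?N" by (rule img)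
    show "ev M (p + q) = ev M p + ev M q" for p q by (rule ev_add)
    show "ev M (p * q) = ev M p * ev M q" for p q by (rule ev_mult[OF Madd Mc])
    show "ev M 1 = 1" using ev_const[of M 1, OF M0] by simp
    show "ev M (const d) = const d" for d by (rule ev_const[of M, OF M0])
  qed
qed

end
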